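(* Let $X,Y\in M_n(\mathbb{C})$ be such that $[X,Y]=XY-YX$ is diagonal but nonzero. Consider the $n\times 2n$ matrix whose first $n$ columns are the diagonals of $X^0,X^1,\dots,X^{n-1}$ and whose last $n$ columns are the diagonals of $Y^0,Y^1,\dots,Y^{n-1}$. Then this matrix has rank at most $n-1$; in particular all of its $n\times n$ minors vanish.
   Context: For a matrix $Z\in M_n(\mathbb{C})$, its diagonal is the column vector $(Z_{11},\dots,Z_{nn})^T$; $X^0=Y^0=I$. *)

theory Defs
  imports "Jordan_Normal_Form.DL_Rank" "Jordan_Normal_Form.DL_Submatrix"
begin

definition diag_powers_mat :: "nat \<Rightarrow> complex mat \<Rightarrow> complex mat \<Rightarrow> complex mat" where
  "diag_powers_mat n X Y = mat n (2 * n) (\<lambda>(i, j).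
      if j < n then (X ^\<^sub>m j) $$ (i, i) else (Y ^\<^sub>m (j - n)) $$ (i, i))"

end

theory Submission
  imports Defs
begin

definition tr :: "nat \<Rightarrow> complex mat \<Rightarrow> complex" where
  "tr n A = (\<Sum>i<n. A $$ (i,i))"

lemma tr_comm:
  assumes "A \<in> carrier_mat n n" "B \<in> carrier_mat n n"
  shows "tr n (A * B) = tr n (B * A)"
proof -
  have "tr n (A * B) = (\<Sum>i<n. \<Sum>l<n. A $$ (i,l) * B $$ (l,i))"
    unfolding tr_def using assms
    by (intro sum.cong refl) (auto simp: scalar_prod_def lessThan_atLeast0 intro!: sum.cong)
  also have "\<dots> = (\<Sum>l<n. \<Sum>i<n. B $$ (l,i) * A $$ (i,l))"
    by (subst sum.swap) (simp add: mult.commute)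
  also have "\<dots> = tr n (B * A)"
    unfolding tr_def using assms
    by (intro sum.cong refl) (auto simp: scalar_prod_def lessThan_atLeast0 intro!: sum.cong)
  finally show ?thesis .
qed

lemma tr_minus:
  assumes "A \<in> carrier_mat n n" "B \<in> carrier_mat n n"
  shows "tr n (A - B) = tr n A - tr n B"
  unfolding tr_def using assms by (simp add: sum_subtractf)

lemma pow_comm:
  assumes "X \<in> carrier_mat n n"
  shows "X * X ^\<^sub>m k = X ^\<^sub>m k * X"
proof (induction k)
  case 0
  then show ?case using assms by simp
next
  case (Suc k)
  have "X * X ^\<^sub>m Suc k = (X * X ^\<^sub>m k) * X"
    using assms by (simp add: assoc_mult_mat[of _ n n _ n _ n])
  also have "\<dots> = X ^\<^sub>m Suc k * X" using Suc by simp
  finally show ?case .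
qed

lemma tr_diag:
  assumes "D \<in> carrier_mat n n" "diagonal_mat D" "P \<in> carrier_mat n n"
  shows "tr n (D * P) = (\<Sum>i<n. D $$ (i,i) * P $$ (i,i))"
proof -
  have "(D * P) $$ (i,i) = D $$ (i,i) * P $$ (i,i)" if "i < n" for i
  proof -
    have "(D * P) $$ (i,i) = (\<Sum>l\<in>{0..<n}. D $$ (i,l) * P $$ (l,i))"
      using assms that by (simp add: scalar_prod_def)
    also have "\<dots> = D $$ (i,i) * P $$ (i,i)"
      using assms that by (subst sum.remove[of _ i]) (auto simp: diagonal_mat_def intro!: sum.neutral)
    finally show ?thesis .
  qed
  then show ?thesis unfolding tr_def by simp
qed

lemma comm_tr_zero:
  assumes X: "X \<in> carrier_mat n n" and Y: "Y \<in> carrier_mat n n" and P: "P \<in> carrier_mat n n"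
    and c: "X * P = P * X \<or> Y * P = P * Y"
  shows "tr n ((X * Y - Y * X) * P) = 0"
proof -
  have e: "(X * Y - Y * X) * P = X * (Y * P) - Y * (X * P)"
    using X Y P by (subst minus_mult_distrib_mat[where nr=n and n=n and nc=n]) auto
  have a: "tr n (X * (Y * P)) = tr n (Y * (P * X))"
    using tr_comm[of X n "Y * P"] X Y P by (simp add: assoc_mult_mat[of _ n n _ n _ n])
  have b: "tr n (Y * (X * P)) = tr n (X * (P * Y))"
    using tr_comm[of Y n "X * P"] X Y P by (simp add: assoc_mult_mat[of _ n n _ n _ n])
  show ?thesis
  proof (cases "X * P = P * X")
    case True
    then show ?thesis using e a X Y P by (simp add: tr_minus)
  next
    case False
    then have "Y * P = P * Y" using c by auto
    then have "tr n (X * (Y * P)) = tr n (Y * (X * P))" using a b X Y P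
      by (metis assoc_mult_mat mult_carrier_mat)
    then show ?thesis using e X Y P by (simp add: tr_minus)
  qed
qed

lemma det_zero_orth:
  fixes A :: "complex mat"
  assumes A: "A \<in> carrier_mat n n" and d: "d \<in> carrier_vec n" "d \<noteq> 0\<^sub>v n"
    and o: "\<And>j. j < n \<Longrightarrow> col A j \<bullet> d = 0"
  shows "det A = 0"
proof -
  have "transpose_mat A *\<^sub>v d = 0\<^sub>v n"
    using A o by (intro eq_vecI) auto
  then have "det (transpose_mat A) = 0"
    using det_0_iff_vec_prod_zero_field[of "transpose_mat A" n] A d by auto
  then show ?thesis using det_transpose[OF A] by simp
qed

lemma pick_interval: "i < n \<Longrightarrow> pick {0..<n} i = i"
proof -
  assume "i < n"
  then have "card {a\<in>{0..<n}. a < i} = i"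
  proof -
    have "{a\<in>{0..<n}. a < i} = {0..<i}" using \<open>i < n\<close> by auto
    then show ?thesis by simp
  qed
  then show ?thesis using pick_card_in_set[of i "{0..<n}"] \<open>i < n\<close> by simp
qed

theorem mainTheorem11:
  fixes n :: nat and X Y :: "complex mat"
  assumes "X \<in> carrier_mat n n" and "Y \<in> carrier_mat n n"
    and "diagonal_mat (X * Y - Y * X)"
    and "X * Y - Y * X \<noteq> 0\<^sub>m n n"
  shows "vec_space.rank n (diag_powers_mat n X Y) \<le> n - 1
    \<and> (\<forall>J. J \<subseteq> {0..<2 * n} \<longrightarrow> card J = n \<longrightarrow>
          det (submatrix (diag_powers_mat n X Y) {0..<n} J) = 0)"
proof -
  note X = assms(1) and Y = assms(2)
  define D where "D = X * Y - Y * X"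
  define M where "M = diag_powers_mat n X Y"
  define d where "d = vec n (\<lambda>i. D $$ (i,i))"
  have Dc: "D \<in> carrier_mat n n" unfolding D_def using X Y by auto
  have Dd: "diagonal_mat D" using assms(3) D_def by simp
  have Mc: "M \<in> carrier_mat n (2*n)" unfolding M_def diag_powers_mat_def by simp
  have dc: "d \<in> carrier_vec n" unfolding d_def by simp
  have dnz: "d \<noteq> 0\<^sub>v n"
  proof
    assume "d = 0\<^sub>v n"
    then have "\<And>i. i < n \<Longrightarrow> D $$ (i,i) = 0" unfolding d_def
      by (metis index_vec index_zero_vec(1))
    then have "D = 0\<^sub>m n n"
    proof (intro eq_matI)
      fix i j assume "i < dim_row (0\<^sub>m n n)" "j < dim_col (0\<^sub>m n n)"
      then show "D $$ (i,j) = 0\<^sub>m n n $$ (i,j)" using \<open>\<And>i. i < n \<Longrightarrow> D $$ (i,i) = 0\<close> Dc Dd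
        by (cases "i = j") (auto simp: diagonal_mat_def)
    qed (use Dc in auto)
    then show False using assms(4) D_def by simp
  qed
  have orth: "col M j \<bullet> d = 0" if "j < 2*n" for j
  proof -
    define P where "P = (if j < n then X ^\<^sub>m j else Y ^\<^sub>m (j - n))"
    have Pc: "P \<in> carrier_mat n n" unfolding P_def using X Y by auto
    have comm: "X * P = P * X \<or> Y * P = P * Y"
      unfolding P_def using pow_comm[OF X] pow_comm[OF Y] by auto
    have "col M j \<bullet> d = (\<Sum>i<n. D $$ (i,i) * P $$ (i,i))"
      using that Mc unfolding scalar_prod_def M_def d_def P_def diag_powers_mat_def
      by (auto simp: lessThan_atLeast0 mult.commute intro!: sum.cong)
    also have "\<dots> = tr n (D * P)" using tr_diag[OF Dc Dd Pc] by simp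
    also have "\<dots> = 0" unfolding D_def using comm_tr_zero[OF X Y Pc comm] .
    finally show ?thesis .
  qed
  have detz: "det A = 0" if Ac: "A \<in> carrier_mat n n" and cols: "set (cols A) \<subseteq> set (cols M)" for A
  proof (rule det_zero_orth[OF Ac dc dnz])
    fix j assume "j < n"
    then have "col A j \<in> set (cols M)" using cols Ac by (auto simp: cols_def)
    then obtain k where "k < 2*n" "col A j = col M k" using Mc by (auto simp: cols_def)
    then show "col A j \<bullet> d = 0" using orth by simp
  qed
  interpret vs: vec_space "TYPE(complex)" n .
  have rank: "vs.rank M \<le> n - 1"
  proof (rule ccontr)
    assume "\<not> vs.rank M \<le> n - 1"
    then have nr: "vs.rank M \<ge> n" by auto
    obtain S where S: "maximal S (\<lambda>T. T \<subseteq> set (cols M) \<and> vs.lin_indpt T)"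
      using maximal_exists[of "(\<lambda>T. T \<subseteq> set (cols M) \<and> vs.lin_indpt T)" "card (set (cols M))" "{}"]
      by (meson List.finite_set card_mono empty_iff empty_subsetI vs.finite_lin_indpt2 rev_finite_subset)
    have rk: "vs.rank M = card S" using vs.rank_card_indpt[OF Mc S] .
    have Ssub: "S \<subseteq> set (cols M)" and Sli: "vs.lin_indpt S" using S by (auto simp: maximal_def)
    have "finite S" using Ssub finite_subset by blast
    then obtain xs where xs: "set xs = S" "distinct xs" using finite_distinct_list by blast
    define ys where "ys = take n xs"
    have lys: "length ys = n" using xs nr rk ys_def distinct_card by fastforce
    have ysS: "set ys \<subseteq> S" unfolding ys_def using xs set_take_subset by metis
    have ysc: "set ys \<subseteq> carrier_vec n" using ysS Ssub Mc cols_dim by blast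
    define A where "A = mat_of_cols n ys"
    have Ac: "A \<in> carrier_mat n n" unfolding A_def using lys mat_of_cols_carrier(1) by metis
    have colsA: "cols A = ys" unfolding A_def using ysc by simp
    have "distinct ys" unfolding ys_def using xs by simp
    moreover have "vs.lin_indpt (set ys)"
      using Sli ysS vs.subset_li_is_li Ssub Mc cols_dim by (metis dual_order.trans)
    ultimately have "vs.rank A = n" using vs.lin_indpt_full_rank[OF Ac] colsA by simp
    then have "det A \<noteq> 0" using vs.det_rank_iff[OF Ac] by simp
    moreover have "det A = 0" using detz[OF Ac] colsA ysS Ssub by auto
    ultimately show False by simp
  qed
  have minors: "det (submatrix M {0..<n} J) = 0" if J: "J \<subseteq> {0..<2 * n}" "card J = n" for J
  proof -
    define S where "S = submatrix M {0..<n} J"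
    have r: "card {i. i < dim_row M \<and> i \<in> {0..<n}} = n" using Mc by simp
    have "{j. j < dim_col M \<and> j \<in> J} = J" using Mc J by auto
    then have c: "card {j. j < dim_col M \<and> j \<in> J} = n" using J by simp
    have dS: "dim_row S = n" "dim_col S = n" unfolding S_def dim_submatrix using r c by simp_all
    have Sc: "S \<in> carrier_mat n n" using dS by (rule carrier_matI)
    show ?thesis unfolding S_def[symmetric]
    proof (rule det_zero_orth[OF Sc dc dnz])
      fix j assume j: "j < n"
      have pj: "pick J j < 2 * n" using pick_le[of j "2*n" J] c Mc j by simp
      have "col S j = col M (pick J j)"
      proof (rule eq_vecI)
        fix i assume "i < dim_vec (col M (pick J j))"
        then have i: "i < n" using Mc by simp
        have "col S j $ i = S $$ (i, j)" using dS i j by simp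
        also have "\<dots> = M $$ (pick {0..<n} i, pick J j)"
          unfolding S_def by (rule submatrix_index) (use r c i j in simp_all)
        also have "\<dots> = col M (pick J j) $ i" using pick_interval[OF i] i pj Mc by simp
        finally show "col S j $ i = col M (pick J j) $ i" .
      qed (use dS Mc in simp)
      then show "col S j \<bullet> d = 0" using orth[OF pj] by simp
    qed
  qed
  show ?thesis using rank minors unfolding M_def by blast
qed

end
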